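(* Let $f\in E^{\nu}_{p,q}$ with $p\ge1$, $q\ge2$, written in the corresponding coordinates $x=(\xi,\eta,x_n)$ as $f=x_n^4+2(|\xi|^2-3|\eta|^2)x_n^2+8\xi^\top A_\eta\xi\, x_n+\theta(\xi,\eta)$, and let $\theta_3$ be the part of $\theta$ that is homogeneous of degree $3$ in $\xi$ and degree $1$ in $\eta$. Then $$\Delta_x f=4(p-3q+3)(x_n^2+|\xi|^2)+4(8\nu-1+q-3p)|\eta|^2+\Delta_\xi\theta_3,$$ where $\Delta_\xi$ is the Laplacian in the $\xi$-variables.
   Context: $f$ is a real homogeneous quartic on $\mathbb{R}^n$ with $|\nabla_x f|^2=16|x|^6$. We say $f\in E^{\nu}_{p,q}$ if there are orthonormal coordinates $x=(\xi,\eta,x_n)$, $\xi\in\mathbb{R}^p$, $\eta\in\mathbb{R}^q$, $p+q=n-1$, in which $f(x)=x_n^4+2(|\xi|^2-3|\eta|^2)x_n^2+8\psi(\xi,\eta)x_n+\theta(\xi,\eta)$ with $\theta$ a homogeneous quartic, $\psi(\xi,\eta)=\xi^\top A_\eta\xi$ where $A_\eta=\sum_{i=1}^q\eta_iA_i$ for symmetric $A_i\in\mathbb{R}^{p\times p}$, and for every $\eta\ne0$ the matrix $A_\eta$ is similar to $|\eta|\,\mathrm{diag}(\mathbf{1}_\nu,-\mathbf{1}_\nu,\mathbf{0}_{p-2\nu})$. *)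

theory Defs
  imports "HOL-Analysis.Analysis"
begin

definition dderiv :: "('a::real_normed_vector \<Rightarrow> real) \<Rightarrow> 'a \<Rightarrow> 'a \<Rightarrow> real" where
  "dderiv f v x = deriv (\<lambda>t. f (x + t *\<^sub>R v)) 0"

definition laplacian :: "('a::euclidean_space \<Rightarrow> real) \<Rightarrow> 'a \<Rightarrow> real" where
  "laplacian f x = (\<Sum>b\<in>Basis. dderiv (dderiv f b) b x)"

definition grad_norm2 :: "('a::euclidean_space \<Rightarrow> real) \<Rightarrow> 'a \<Rightarrow> real" where
  "grad_norm2 f x = (\<Sum>b\<in>Basis. (dderiv f b x)\<^sup>2)"

definition homogeneous_quartic :: "('a::euclidean_space \<Rightarrow> real) \<Rightarrow> bool" where
  "homogeneous_quartic f \<longleftrightarrow>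
     (\<exists>c :: 'a \<Rightarrow> 'a \<Rightarrow> 'a \<Rightarrow> 'a \<Rightarrow> real. \<forall>x.
        f x = (\<Sum>b1\<in>Basis. \<Sum>b2\<in>Basis. \<Sum>b3\<in>Basis. \<Sum>b4\<in>Basis.
                 c b1 b2 b3 b4 * (x \<bullet> b1) * (x \<bullet> b2) * (x \<bullet> b3) * (x \<bullet> b4)))"

definition similar_matrix :: "real^'n^'n \<Rightarrow> real^'n^'n \<Rightarrow> bool" where
  "similar_matrix A B \<longleftrightarrow> (\<exists>P. invertible P \<and> A = P ** B ** matrix_inv P)"

text \<open>A_eta is similar to |eta| diag(1_nu, -1_nu, 0_{p-2nu}); since the index type has no
  preferred ordering, the diagonal is given by a sign vector d with nu entries 1, nu entries -1
  and the remaining entries 0 (the order of diagonal entries is irrelevant up to similarity).\<close>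
definition sign_diag_similar :: "nat \<Rightarrow> real \<Rightarrow> real^'n^'n \<Rightarrow> bool" where
  "sign_diag_similar \<nu> r A \<longleftrightarrow>
     (\<exists>d :: 'n \<Rightarrow> real. (\<forall>i. d i \<in> {-1, 0, 1}) \<and>
        card {i. d i = 1} = \<nu> \<and> card {i. d i = -1} = \<nu> \<and>
        similar_matrix A (\<chi> i j. if i = j then r * d i else 0))"

end

theory Submission
  imports Defs "HOL-Computational_Algebra.Polynomial"
begin


definition PL :: "('a::real_vector \<Rightarrow> real) \<Rightarrow> bool" where
  "PL g \<longleftrightarrow> (\<forall>x v. \<exists>P. \<forall>s. g (x + s *\<^sub>R v) = poly P s)"

definition Q :: "('a::real_normed_vector \<Rightarrow> real) \<Rightarrow> 'a \<Rightarrow> 'a \<Rightarrow> real" where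
  "Q g x v = dderiv (dderiv g v) v x"

lemma D_coeff:
  assumes "\<And>s. g (x + s *\<^sub>R v) = poly P s"
  shows "dderiv g v x = coeff P 1"
proof -
  have "(\<lambda>s. g (x + s *\<^sub>R v)) = poly P" using assms by auto
  hence "dderiv g v x = deriv (poly P) 0" by (simp add: dderiv_def)
  also have "\<dots> = poly (pderiv P) 0" by (rule DERIV_imp_deriv) simp
  also have "\<dots> = coeff P 1" by (simp add: poly_0_coeff_0 coeff_pderiv)
  finally show ?thesis .
qed

lemma Q_coeff:
  assumes "\<And>s. g (x + s *\<^sub>R v) = poly P s"
  shows "Q g x v = 2 * coeff P 2"
proof -
  have 1: "dderiv g v (x + u *\<^sub>R v) = poly (pderiv P) u" for u
  proof -
    have "(\<lambda>s. g (x + u *\<^sub>R v + s *\<^sub>R v)) = (\<lambda>s. poly P (u + s))"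
      using assms[of "u+_"] by (auto simp: algebra_simps scaleR_add_left)
    hence "dderiv g v (x + u *\<^sub>R v) = deriv (\<lambda>s. poly P (u + s)) 0" by (simp add: dderiv_def)
    also have "\<dots> = poly (pderiv P) u"
      by (rule DERIV_imp_deriv) (auto intro!: derivative_eq_intros)
    finally show ?thesis .
  qed
  have "Q g x v = deriv (poly (pderiv P)) 0"
    unfolding Q_def dderiv_def[of "dderiv g v"] using 1 by (simp add: dderiv_def)
  also have "\<dots> = poly (pderiv (pderiv P)) 0" by (rule DERIV_imp_deriv) simp
  also have "\<dots> = 2 * coeff P 2" by (simp add: poly_0_coeff_0 coeff_pderiv numeral_2_eq_2)
  finally show ?thesis .
qed


lemma PLD: "PL g \<Longrightarrow> \<exists>P. \<forall>s. g (x + s *\<^sub>R v) = poly P s"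
  unfolding PL_def by blast

lemma PL_const[simp]: "PL (\<lambda>x. c)"
  unfolding PL_def by (auto intro: exI[of _ "[:c:]"])

lemma PL_add[simp]: "PL g \<Longrightarrow> PL h \<Longrightarrow> PL (\<lambda>x. g x + h x)"
  unfolding PL_def
proof (intro allI)
  fix x v assume "\<forall>x v. \<exists>P. \<forall>s. g (x + s *\<^sub>R v) = poly P s" "\<forall>x v. \<exists>P. \<forall>s. h (x + s *\<^sub>R v) = poly P s"
  then obtain P R where "\<forall>s. g (x + s *\<^sub>R v) = poly P s" "\<forall>s. h (x + s *\<^sub>R v) = poly R s" by blast
  then show "\<exists>P. \<forall>s. g (x + s *\<^sub>R v) + h (x + s *\<^sub>R v) = poly P s"
    by (intro exI[of _ "P + R"]) simp
qed

lemma PL_diff[simp]: "PL g \<Longrightarrow> PL h \<Longrightarrow> PL (\<lambda>x. g x - h x)"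
  unfolding PL_def
proof (intro allI)
  fix x v assume "\<forall>x v. \<exists>P. \<forall>s. g (x + s *\<^sub>R v) = poly P s" "\<forall>x v. \<exists>P. \<forall>s. h (x + s *\<^sub>R v) = poly P s"
  then obtain P R where "\<forall>s. g (x + s *\<^sub>R v) = poly P s" "\<forall>s. h (x + s *\<^sub>R v) = poly R s" by blast
  then show "\<exists>P. \<forall>s. g (x + s *\<^sub>R v) - h (x + s *\<^sub>R v) = poly P s"
    by (intro exI[of _ "P - R"]) simp
qed

lemma PL_mult[simp]: "PL g \<Longrightarrow> PL h \<Longrightarrow> PL (\<lambda>x. g x * h x)"
  unfolding PL_def
proof (intro allI)
  fix x v assume "\<forall>x v. \<exists>P. \<forall>s. g (x + s *\<^sub>R v) = poly P s" "\<forall>x v. \<exists>P. \<forall>s. h (x + s *\<^sub>R v) = poly P s"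
  then obtain P R where "\<forall>s. g (x + s *\<^sub>R v) = poly P s" "\<forall>s. h (x + s *\<^sub>R v) = poly R s" by blast
  then show "\<exists>P. \<forall>s. g (x + s *\<^sub>R v) * h (x + s *\<^sub>R v) = poly P s"
    by (intro exI[of _ "P * R"]) simp
qed

lemma PL_pow[simp]: "PL g \<Longrightarrow> PL (\<lambda>x. g x ^ n)"
proof (induction n)
  case (Suc n) thus ?case using PL_mult[of g "\<lambda>x. g x ^ n"] by simp
qed simp

lemma PL_sum[simp]: "(\<And>i. i \<in> I \<Longrightarrow> PL (g i)) \<Longrightarrow> PL (\<lambda>x. \<Sum>i\<in>I. g i x)"
proof (induction I rule: infinite_finite_induct)
  case (insert a F) thus ?case using PL_add[of "g a" "\<lambda>x. \<Sum>i\<in>F. g i x"] by auto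
qed auto

lemma PL_linear: "linear l \<Longrightarrow> PL l"
  unfolding PL_def
proof (intro allI)
  fix x v assume "linear l"
  then show "\<exists>P. \<forall>s. l (x + s *\<^sub>R v) = poly P s"
    by (intro exI[of _ "[:l x, l v:]"]) (simp add: linear_add linear_scale)
qed

lemma PL_comp: "PL g \<Longrightarrow> linear L \<Longrightarrow> PL (\<lambda>x. g (L x))"
  unfolding PL_def by (simp add: linear_add linear_scale)

lemma PL_inner: "linear L1 \<Longrightarrow> linear L2 \<Longrightarrow> PL (\<lambda>x. L1 x \<bullet> L2 x)"
  unfolding PL_def
proof (intro allI)
  fix x v assume "linear L1" "linear L2"
  then show "\<exists>P. \<forall>s. L1 (x + s *\<^sub>R v) \<bullet> L2 (x + s *\<^sub>R v) = poly P s"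
  by (intro exI[of _ "[:L1 x \<bullet> L2 x, L1 x \<bullet> L2 v + L1 v \<bullet> L2 x, L1 v \<bullet> L2 v:]"])
   (auto simp: linear_add linear_scale inner_add_left inner_add_right algebra_simps)
qed

lemma D_const[simp]: "dderiv (\<lambda>x. c) v x = 0"
  using D_coeff[of "\<lambda>x. c" x v "[:c:]"] by simp
lemma Q_const[simp]: "Q (\<lambda>x. c) x v = 0"
  by (subst Q_coeff[of _ _ _ "[:c:]"]) (auto simp: numeral_2_eq_2)

lemma D_add[simp]: "PL g \<Longrightarrow> PL h \<Longrightarrow> dderiv (\<lambda>x. g x + h x) v x = dderiv g v x + dderiv h v x"
proof -
  assume "PL g" "PL h"
  then obtain P R where P: "\<And>s. g (x + s *\<^sub>R v) = poly P s" and R: "\<And>s. h (x + s *\<^sub>R v) = poly R s"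
    by (metis PLD)
  show ?thesis
    using D_coeff[OF P] D_coeff[OF R] D_coeff[of "\<lambda>x. g x + h x" x v "P + R"] P R by simp
qed
lemma Q_add[simp]: "PL g \<Longrightarrow> PL h \<Longrightarrow> Q (\<lambda>x. g x + h x) x v = Q g x v + Q h x v"
proof -
  assume "PL g" "PL h"
  then obtain P R where P: "\<And>s. g (x + s *\<^sub>R v) = poly P s" and R: "\<And>s. h (x + s *\<^sub>R v) = poly R s"
    by (metis PLD)
  show ?thesis
    using Q_coeff[OF P] Q_coeff[OF R] Q_coeff[of "\<lambda>x. g x + h x" x v "P + R"] P R by simp
qed
lemma D_diff[simp]: "PL g \<Longrightarrow> PL h \<Longrightarrow> dderiv (\<lambda>x. g x - h x) v x = dderiv g v x - dderiv h v x"
proof -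
  assume "PL g" "PL h"
  then obtain P R where P: "\<And>s. g (x + s *\<^sub>R v) = poly P s" and R: "\<And>s. h (x + s *\<^sub>R v) = poly R s"
    by (metis PLD)
  show ?thesis
    using D_coeff[OF P] D_coeff[OF R] D_coeff[of "\<lambda>x. g x - h x" x v "P - R"] P R by simp
qed
lemma Q_diff[simp]: "PL g \<Longrightarrow> PL h \<Longrightarrow> Q (\<lambda>x. g x - h x) x v = Q g x v - Q h x v"
proof -
  assume "PL g" "PL h"
  then obtain P R where P: "\<And>s. g (x + s *\<^sub>R v) = poly P s" and R: "\<And>s. h (x + s *\<^sub>R v) = poly R s"
    by (metis PLD)
  show ?thesis
    using Q_coeff[OF P] Q_coeff[OF R] Q_coeff[of "\<lambda>x. g x - h x" x v "P - R"] P R by (simp add: algebra_simps)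
qed

lemma coeff_mult_1: "coeff (p * q) 1 = coeff p 0 * coeff q 1 + coeff p 1 * coeff q 0"
  by (simp add: coeff_mult)
lemma coeff_mult_2: "coeff (p * q) 2 = coeff p 0 * coeff q 2 + coeff p 1 * coeff q 1 + coeff p 2 * coeff q 0"
  by (simp add: coeff_mult numeral_2_eq_2 atMost_Suc algebra_simps)

lemma coeff_mult_1': "coeff (p * q) (Suc 0) = coeff p 0 * coeff q (Suc 0) + coeff p (Suc 0) * coeff q 0"
  using coeff_mult_1 by simp
lemma coeff_mult_2': "coeff (p * q) (Suc (Suc 0)) = coeff p 0 * coeff q (Suc (Suc 0)) + coeff p (Suc 0) * coeff q (Suc 0) + coeff p (Suc (Suc 0)) * coeff q 0"
  using coeff_mult_2 by (simp add: numeral_2_eq_2)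
lemma coeff_pCons_2[simp]: "coeff (pCons a p) 2 = coeff p 1"
  by (simp add: numeral_2_eq_2)

lemma P0: "(\<And>s. g ((x::'a::real_vector) + s *\<^sub>R v) = poly P s) \<Longrightarrow> g x = coeff P 0"
proof -
  assume "\<And>s. g (x + s *\<^sub>R v) = poly P s"
  from this[of 0] show ?thesis by (simp add: poly_0_coeff_0)
qed

lemma D_mult[simp]: "PL g \<Longrightarrow> PL h \<Longrightarrow> dderiv (\<lambda>x. g x * h x) v x = g x * dderiv h v x + dderiv g v x * h x"
proof -
  assume "PL g" "PL h"
  then obtain P R where P: "\<And>s. g (x + s *\<^sub>R v) = poly P s" and R: "\<And>s. h (x + s *\<^sub>R v) = poly R s"
    by (metis PLD)
  show ?thesis
    using D_coeff[OF P] D_coeff[OF R] D_coeff[of "\<lambda>x. g x * h x" x v "P * R"] P0[OF P] P0[OF R] P R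
    by (simp add: coeff_mult_1 coeff_mult_1')
qed

lemma Q_mult[simp]: "PL g \<Longrightarrow> PL h \<Longrightarrow> Q (\<lambda>x. g x * h x) x v = g x * Q h x v + 2 * dderiv g v x * dderiv h v x + Q g x v * h x"
proof -
  assume "PL g" "PL h"
  then obtain P R where P: "\<And>s. g (x + s *\<^sub>R v) = poly P s" and R: "\<And>s. h (x + s *\<^sub>R v) = poly R s"
    by (metis PLD)
  show ?thesis
    using D_coeff[OF P] D_coeff[OF R] Q_coeff[OF P] Q_coeff[OF R] Q_coeff[of "\<lambda>x. g x * h x" x v "P * R"] P0[OF P] P0[OF R] P R
    by (simp add: coeff_mult_2 coeff_mult_2' algebra_simps)
qed

lemma D_sum[simp]: "finite I \<Longrightarrow> (\<And>i. i \<in> I \<Longrightarrow> PL (g i)) \<Longrightarrow> dderiv (\<lambda>x. \<Sum>i\<in>I. g i x) v x = (\<Sum>i\<in>I. dderiv (g i) v x)"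
proof (induction I rule: finite_induct)
  case empty then show ?case by simp
next
  case (insert a F) thus ?case using D_add[of "g a" "\<lambda>x. \<Sum>i\<in>F. g i x"] by auto
qed

lemma Q_sum[simp]: "finite I \<Longrightarrow> (\<And>i. i \<in> I \<Longrightarrow> PL (g i)) \<Longrightarrow> Q (\<lambda>x. \<Sum>i\<in>I. g i x) x v = (\<Sum>i\<in>I. Q (g i) x v)"
proof (induction I rule: finite_induct)
  case empty then show ?case by simp
next
  case (insert a F) thus ?case using Q_add[of "g a" "\<lambda>x. \<Sum>i\<in>F. g i x"] by auto
qed

lemma D_pow[simp]: "PL g \<Longrightarrow> dderiv (\<lambda>x. g x ^ n) v x = of_nat n * g x ^ (n - 1) * dderiv g v x"
proof (induction n)
  case 0 then show ?case by simp
next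
  case (Suc n)
  have "dderiv (\<lambda>x. g x ^ Suc n) v x = dderiv (\<lambda>x. g x * g x ^ n) v x" by simp
  also have "\<dots> = g x * dderiv (\<lambda>x. g x ^ n) v x + dderiv g v x * g x ^ n"
    using Suc by (simp del: power_Suc)
  also have "\<dots> = of_nat (Suc n) * g x ^ n * dderiv g v x"
    using Suc by (cases n) (auto simp: algebra_simps)
  finally show ?case by simp
qed

lemma D_linear: "linear l \<Longrightarrow> dderiv l v x = l v"
  using D_coeff[of l x v "[:l x, l v:]"] by (simp add: linear_add linear_scale)
lemma Q_linear: "linear l \<Longrightarrow> Q l x v = 0"
  by (subst Q_coeff[of _ _ _ "[:l x, l v:]"]) (simp_all add: linear_add linear_scale)

lemma inner_lines: "linear L1 \<Longrightarrow> linear L2 \<Longrightarrow>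
   L1 (x + s *\<^sub>R v) \<bullet> L2 (x + s *\<^sub>R v) = poly [:L1 x \<bullet> L2 x, L1 x \<bullet> L2 v + L1 v \<bullet> L2 x, L1 v \<bullet> L2 v:] s"
  by (simp add: linear_add linear_scale inner_add_left inner_add_right algebra_simps)

lemma D_inner: "linear L1 \<Longrightarrow> linear L2 \<Longrightarrow> dderiv (\<lambda>x. L1 x \<bullet> L2 x) v x = L1 x \<bullet> L2 v + L1 v \<bullet> L2 x"
  by (subst D_coeff[of _ _ _ "[:L1 x \<bullet> L2 x, L1 x \<bullet> L2 v + L1 v \<bullet> L2 x, L1 v \<bullet> L2 v:]"])
    (rule inner_lines, assumption+, simp)
lemma Q_inner: "linear L1 \<Longrightarrow> linear L2 \<Longrightarrow> Q (\<lambda>x. L1 x \<bullet> L2 x) x v = 2 * (L1 v \<bullet> L2 v)"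
  by (subst Q_coeff[of _ _ _ "[:L1 x \<bullet> L2 x, L1 x \<bullet> L2 v + L1 v \<bullet> L2 x, L1 v \<bullet> L2 v:]"])
    (rule inner_lines, assumption+, simp)


lemma Q_sq: "PL g \<Longrightarrow> Q (\<lambda>x. g x ^ 2) x v = 2 * g x * Q g x v + 2 * (dderiv g v x)\<^sup>2"
  using Q_mult[of g g x v] by (simp add: power2_eq_square algebra_simps)

lemma Q_p4: "PL g \<Longrightarrow> Q (\<lambda>x. g x ^ 4) x v = 4 * g x ^ 3 * Q g x v + 12 * (g x)\<^sup>2 * (dderiv g v x)\<^sup>2"
proof -
  assume g: "PL g"
  have "Q (\<lambda>x. g x ^ 4) x v = Q (\<lambda>x. (g x ^ 2) ^ 2) x v" by (simp add: power_mult[symmetric])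
  also have "\<dots> = 2 * g x ^ 2 * Q (\<lambda>x. g x ^ 2) x v + 2 * (dderiv (\<lambda>x. g x ^ 2) v x)\<^sup>2"
    by (rule Q_sq) (simp add: g)
  also have "\<dots> = 4 * g x ^ 3 * Q g x v + 12 * (g x)\<^sup>2 * (dderiv g v x)\<^sup>2"
    using g by (simp add: Q_sq algebra_simps power2_eq_square power3_eq_cube)
  finally show ?thesis .
qed

lemma PL_affine: "PL g \<Longrightarrow> linear L \<Longrightarrow> PL (\<lambda>y. g (c + L y))"
  unfolding PL_def
proof (intro allI)
  fix x v assume g: "\<forall>x v. \<exists>P. \<forall>s. g (x + s *\<^sub>R v) = poly P s" and L: "linear L"
  from g obtain P where "\<forall>s. g ((c + L x) + s *\<^sub>R L v) = poly P s" by blast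
  then show "\<exists>P. \<forall>s. g (c + L (x + s *\<^sub>R v)) = poly P s"
    using L by (auto simp: linear_add linear_scale add.assoc)
qed

lemma Q_const_dir: "(\<And>s. g (x + s *\<^sub>R v) = g x) \<Longrightarrow> Q g x v = 0"
  by (subst Q_coeff[of _ _ _ "[:g x:]"]) (auto simp: numeral_2_eq_2)

lemma sum_Basis_prod_real:
  fixes F :: "('a::euclidean_space \<times> 'b::euclidean_space) \<Rightarrow> real"
  shows "sum F Basis = sum (\<lambda>i. F (i, 0)) Basis + sum (\<lambda>i. F (0, i)) Basis"
proof -
  have "inj_on (\<lambda>u. (u::'a, 0::'b)) Basis" "inj_on (\<lambda>u. (0::'a, u::'b)) Basis"
    by (auto intro!: inj_onI Pair_inject)
  thus ?thesis
    unfolding Basis_prod_def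
    by (subst sum.union_disjoint) (auto simp: Basis_prod_def sum.reindex)
qed

lemma sum_Basis_X:
  fixes F :: "(real^'p) \<times> (real^'q) \<times> real \<Rightarrow> real"
  shows "sum F Basis = (\<Sum>e\<in>Basis. F (e, 0, 0)) + (\<Sum>e\<in>Basis. F (0, e, 0)) + F (0, 0, 1)"
  by (simp add: sum_Basis_prod_real zero_prod_def)

lemma sum_Basis_cart:
  fixes F :: "real^'n \<Rightarrow> real"
  shows "sum F Basis = (\<Sum>j\<in>UNIV. F (axis j 1))"
proof -
  have "Basis = (\<lambda>j. axis j (1::real)) ` (UNIV :: 'n set)"
    by (auto simp: Basis_vec_def)
  moreover have "inj (\<lambda>j. axis j (1::real) :: real^'n)"
    by (auto intro!: injI simp: axis_eq_axis)
  ultimately show ?thesis using sum.reindex[of "\<lambda>j. axis j (1::real) :: real^'n" UNIV F] by (simp add: o_def)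
qed

lemma lin_fst: "linear (\<lambda>x::(real^'p) \<times> (real^'q) \<times> real. fst x)"
  by (simp add: linear_fst)
lemma lin_eta: "linear (\<lambda>x::(real^'p) \<times> (real^'q) \<times> real. fst (snd x))"
  by (intro linear_compose[of snd fst, unfolded o_def] linear_fst linear_snd)
lemma lin_t: "linear (\<lambda>x::(real^'p) \<times> (real^'q) \<times> real. snd (snd x))"
  by (intro linear_compose[of snd snd, unfolded o_def] linear_snd)
lemma lin_etai: "linear (\<lambda>x::(real^'p) \<times> (real^'q) \<times> real. fst (snd x) $ i)"
  by (intro linear_compose[of "\<lambda>x. fst (snd x)" "\<lambda>v. v $ i", unfolded o_def] lin_eta)
     (simp add: linearI)
lemma lin_Afst: "linear (\<lambda>x::(real^'p) \<times> (real^'q) \<times> real. (A::real^'p^'p) *v fst x)"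
  by (intro linear_compose[of fst "(*v) A", unfolded o_def] linear_fst matrix_vector_mul_linear)

lemma mv_sum: "(\<Sum>i\<in>UNIV. c i *\<^sub>R A i) *v (x::real^'p) = (\<Sum>i\<in>UNIV. c i *\<^sub>R (A i *v x))"
  unfolding vec_eq_iff
  by (simp add: matrix_vector_mult_def sum_distrib_left sum_distrib_right mult.assoc sum_component)
     (intro allI sum.swap)

lemma sym_inner: "transpose A = A \<Longrightarrow> x \<bullet> ((A::real^'p^'p) *v y) = (A *v x) \<bullet> y"
  by (metis dot_lmul_matrix inner_commute transpose_transpose vector_transpose_matrix)


lemma matrix_inv_props:
  assumes "invertible (P::real^'n^'n)"
  shows "P ** matrix_inv P = mat 1" "matrix_inv P ** P = mat 1"
proof -
  have "\<exists>A'. P ** A' = mat 1 \<and> A' ** P = mat 1" using assms by (simp add: invertible_def)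
  hence "P ** matrix_inv P = mat 1 \<and> matrix_inv P ** P = mat 1"
    unfolding matrix_inv_def by (rule someI_ex)
  thus "P ** matrix_inv P = mat 1" "matrix_inv P ** P = mat 1" by auto
qed

lemma sum_if_card: "(\<Sum>i\<in>(UNIV::'n::finite set). if P i then (1::real) else 0) = real (card {i. P i})"
  by (simp add: sum.If_cases)

lemma sign_diag_trace:
  fixes B :: "real^'n^'n"
  assumes "sign_diag_similar \<nu> r B"
  shows "trace B = 0" "trace (B ** B) = 2 * real \<nu> * r\<^sup>2"
proof -
  obtain d :: "'n \<Rightarrow> real" where d: "\<forall>i. d i \<in> {-1, 0, 1}" "card {i. d i = 1} = \<nu>" "card {i. d i = -1} = \<nu>"
     and sim: "similar_matrix B (\<chi> i j. if i = j then r * d i else 0)"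
    using assms unfolding sign_diag_similar_def by blast
  define D :: "real^'n^'n" where "D = (\<chi> i j. if i = j then r * d i else 0)"
  obtain P where P: "invertible P" and B: "B = P ** D ** matrix_inv P"
    using sim unfolding similar_matrix_def D_def by blast
  note Pi = matrix_inv_props[OF P]
  have tr: "trace (P ** M ** matrix_inv P) = trace M" for M :: "real^'n^'n"
  proof -
    have "trace (P ** M ** matrix_inv P) = trace (matrix_inv P ** (P ** M))" by (rule trace_mul_sym)
    also have "\<dots> = trace M" by (simp add: matrix_mul_assoc Pi)
    finally show ?thesis .
  qed
  have d1: "d i = (if d i = 1 then 1 else 0) - (if d i = -1 then 1 else 0)" for i
    using d(1)[rule_format, of i] by auto
  have d2: "d i * d i = (if d i = 1 then 1 else 0) + (if d i = -1 then 1 else 0)" for i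
    using d(1)[rule_format, of i] by auto
  have "trace D = r * (\<Sum>i\<in>UNIV. d i)" by (simp add: trace_def D_def sum_distrib_left)
  also have "(\<Sum>i\<in>UNIV. d i) = (\<Sum>i\<in>UNIV. (if d i = 1 then 1 else 0) - (if d i = -1 then 1 else 0))"
    by (rule sum.cong[OF refl], rule d1)
  also have "\<dots> = 0" by (simp add: sum_subtractf sum_if_card d(2,3))
  finally show "trace B = 0" by (simp add: B tr)
  have "B ** B = P ** (D ** D) ** matrix_inv P"
    by (simp add: B matrix_mul_assoc) (metis Pi(2) matrix_mul_assoc matrix_mul_rid)
  hence "trace (B ** B) = trace (D ** D)" by (simp add: tr)
  also have "trace (D ** D) = r\<^sup>2 * (\<Sum>i\<in>UNIV. d i * d i)"
  proof -
    have "(\<Sum>k\<in>UNIV. (if i = k then r * d i else 0) * (if k = i then r * d k else 0)) = r\<^sup>2 * (d i * d i)" for i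
    proof -
      have "(\<Sum>k\<in>UNIV. (if i = k then r * d i else 0) * (if k = i then r * d k else 0)) =
            (\<Sum>k\<in>UNIV. if k = i then r\<^sup>2 * (d i * d i) else 0)"
        by (rule sum.cong) (auto simp: power2_eq_square)
      thus ?thesis by simp
    qed
    thus ?thesis by (simp add: trace_def D_def matrix_matrix_mult_def sum_distrib_left)
  qed
  also have "(\<Sum>i\<in>UNIV. d i * d i) = (\<Sum>i\<in>UNIV. (if d i = 1 then 1 else 0) + (if d i = -1 then 1 else 0))"
    by (rule sum.cong[OF refl], rule d2)
  also have "\<dots> = 2 * real \<nu>" by (simp add: sum.distrib sum_if_card d(2,3))
  finally show "trace (B ** B) = 2 * real \<nu> * r\<^sup>2" by simp
qed


lemma poly_eq_nonzero:
  fixes A B :: "real poly"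
  assumes "\<And>s. s \<noteq> 0 \<Longrightarrow> poly A s = poly B s"
  shows "A = B"
proof (rule ccontr)
  assume "A \<noteq> B"
  hence "A - B \<noteq> 0" by simp
  hence fin: "finite {x. poly (A - B) x = 0}" by (rule poly_roots_finite)
  have "UNIV - {0::real} \<subseteq> {x. poly (A - B) x = 0}" using assms by auto
  moreover have "infinite (UNIV - {0::real})" by (simp add: infinite_UNIV_char_0)
  ultimately show False using fin finite_subset by blast
qed

lemma hom1_Q:
  fixes \<phi> :: "'a::real_normed_vector \<Rightarrow> real"
  assumes PL: "PL \<phi>" and hom: "\<And>c y. \<phi> (c *\<^sub>R y) = c * \<phi> y"
  shows "Q \<phi> y v = 0"
proof -
  obtain P where P: "\<And>s. \<phi> (y + s *\<^sub>R v) = poly P s" using PLD[OF PL] by blast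
  obtain R where R: "\<And>u. \<phi> (v + u *\<^sub>R y) = poly R u" using PLD[OF PL] by blast
  define n where "n = degree R"
  have key: "poly (monom 1 n * P) s = poly ([:0,1:] * reflect_poly R) s" if s: "s \<noteq> 0" for s
  proof -
    have "y + s *\<^sub>R v = s *\<^sub>R (v + inverse s *\<^sub>R y)" using s by (simp add: algebra_simps)
    hence "poly P s = s * poly R (inverse s)" using P[of s] R[of "inverse s"] hom by metis
    thus ?thesis using s by (simp add: poly_reflect_poly_nz poly_monom n_def algebra_simps)
  qed
  hence eq: "monom 1 n * P = [:0,1:] * reflect_poly R" by (rule poly_eq_nonzero)
  have "coeff P 2 = 0"
  proof (cases "P = 0")
    case False
    have "degree (monom 1 n * P) = n + degree P"
      using False by (simp add: degree_mult_eq degree_monom_eq)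
    moreover have "degree ([:0,1:] * reflect_poly R) \<le> 1 + n"
      using degree_mult_le[of "[:0,1:]" "reflect_poly R"] degree_reflect_poly_le[of R]
      by (simp add: n_def)
    ultimately have "degree P \<le> 1" using eq by simp
    thus ?thesis by (intro coeff_eq_0) simp
  qed simp
  thus ?thesis using Q_coeff[of \<phi> y v P] P by simp
qed

lemma t2_coeff:
  fixes \<alpha> \<beta> \<gamma> :: "'i \<Rightarrow> real" and \<alpha>' \<beta>' \<gamma>' :: "'j \<Rightarrow> real"
  assumes fin: "finite E" "finite E'"
  assumes "\<And>t. (\<Sum>e\<in>E. (\<alpha> e * t\<^sup>2 + \<beta> e * t + \<gamma> e)\<^sup>2) + (\<Sum>e\<in>E'. (\<alpha>' e * t\<^sup>2 + \<beta>' e * t + \<gamma>' e)\<^sup>2)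
     + (4 * t ^ 3 + c1 * t + c0)\<^sup>2 = 16 * (t\<^sup>2 + r) ^ 3"
  shows "(\<Sum>e\<in>E. (\<beta> e)\<^sup>2 + 2 * \<alpha> e * \<gamma> e) + (\<Sum>e\<in>E'. (\<beta>' e)\<^sup>2 + 2 * \<alpha>' e * \<gamma>' e) + c1\<^sup>2 = 48 * r\<^sup>2"
proof -
  define Pq where "Pq = (\<lambda>a b c::real. [:c\<^sup>2, 2*b*c, b\<^sup>2 + 2*a*c, 2*a*b, a\<^sup>2:])"
  have sq: "(a * t\<^sup>2 + b * t + c)\<^sup>2 = poly (Pq a b c) t" for a b c t :: real
    by (simp add: Pq_def algebra_simps power2_eq_square)
  define L where "L = (\<Sum>e\<in>E. Pq (\<alpha> e) (\<beta> e) (\<gamma> e)) + (\<Sum>e\<in>E'. Pq (\<alpha>' e) (\<beta>' e) (\<gamma>' e))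
      + [:c0\<^sup>2, 2*c0*c1, c1\<^sup>2, 8*c0, 8*c1, 0, 16:]"
  define Rp where "Rp = [:16*r^3, 0, 48*r\<^sup>2, 0, 48*r, 0, 16:]"
  have "poly L t = poly Rp t" for t
  proof -
    have "poly L t = (\<Sum>e\<in>E. (\<alpha> e * t\<^sup>2 + \<beta> e * t + \<gamma> e)\<^sup>2) + (\<Sum>e\<in>E'. (\<alpha>' e * t\<^sup>2 + \<beta>' e * t + \<gamma>' e)\<^sup>2)
     + (4 * t ^ 3 + c1 * t + c0)\<^sup>2"
    proof -
      have "poly L t = (\<Sum>e\<in>E. poly (Pq (\<alpha> e) (\<beta> e) (\<gamma> e)) t) + (\<Sum>e\<in>E'. poly (Pq (\<alpha>' e) (\<beta>' e) (\<gamma>' e)) t)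
         + poly [:c0\<^sup>2, 2*c0*c1, c1\<^sup>2, 8*c0, 8*c1, 0, 16:] t"
        by (simp add: L_def poly_sum)
      moreover have "poly [:c0\<^sup>2, 2*c0*c1, c1\<^sup>2, 8*c0, 8*c1, 0, 16:] t = (4 * t ^ 3 + c1 * t + c0)\<^sup>2"
        by (simp add: algebra_simps power2_eq_square power3_eq_cube)
      ultimately show ?thesis by (simp only: sq[symmetric])
    qed
    also have "\<dots> = 16 * (t\<^sup>2 + r) ^ 3" by (rule assms(3))
    also have "\<dots> = poly Rp t" by (simp add: Rp_def algebra_simps power2_eq_square power3_eq_cube)
    finally show ?thesis .
  qed
  hence "L = Rp" using poly_eq_poly_eq_iff by blast
  hence "coeff L 2 = coeff Rp 2" by simp
  thus ?thesis by (simp add: L_def Rp_def coeff_sum Pq_def)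
qed


lemma s_coeffs:
  fixes c :: "nat \<Rightarrow> real"
  assumes "\<And>s. (\<Sum>k\<le>4. c k * s ^ k) = d0 + d2 * s\<^sup>2 + d4 * s ^ 4"
  shows "c 0 = d0" "c 1 = 0" "c 2 = d2" "c 3 = 0" "c 4 = d4"
proof -
  have "poly [:c 0, c 1, c 2, c 3, c 4:] s = poly [:d0, 0, d2, 0, d4:] s" for s
    using assms[of s] by (simp add: atMost_Suc eval_nat_numeral algebra_simps power2_eq_square)
  hence "[:c 0, c 1, c 2, c 3, c 4:] = [:d0, 0, d2, 0, d4:]" using poly_eq_poly_eq_iff by blast
  thus "c 0 = d0" "c 1 = 0" "c 2 = d2" "c 3 = 0" "c 4 = d4" by simp_all
qed

definition PD :: "('a::real_normed_vector \<Rightarrow> real) \<Rightarrow> bool" where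
  "PD g \<longleftrightarrow> PL g \<and> (\<forall>z. linear (\<lambda>v. dderiv g v z))"

lemma PD_PL: "PD g \<Longrightarrow> PL g" by (simp add: PD_def)

lemma PD_const: "PD (\<lambda>x. c)"
  by (simp add: PD_def linear_zero)

lemma PD_add: "PD g \<Longrightarrow> PD h \<Longrightarrow> PD (\<lambda>x. g x + h x)"
  by (simp add: PD_def linear_add linear_compose_add)

lemma lin_comb: "linear L1 \<Longrightarrow> linear L2 \<Longrightarrow> linear (\<lambda>v. (a::real) * L1 v + L2 v * b)"
  by (rule linearI) (simp_all add: linear_add linear_scale algebra_simps)

lemma PD_mult: "PD g \<Longrightarrow> PD h \<Longrightarrow> PD (\<lambda>x. g x * h x)"
  unfolding PD_def
proof (intro conjI allI)
  fix z assume a: "PL g \<and> (\<forall>z. linear (\<lambda>v. dderiv g v z))" "PL h \<and> (\<forall>z. linear (\<lambda>v. dderiv h v z))"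
  hence "(\<lambda>v. dderiv (\<lambda>x. g x * h x) v z) = (\<lambda>v. g z * dderiv h v z + dderiv g v z * h z)" by simp
  moreover have "linear (\<lambda>v. g z * dderiv h v z + dderiv g v z * h z)"
    using a by (intro lin_comb) auto
  ultimately show "linear (\<lambda>v. dderiv (\<lambda>x. g x * h x) v z)" by simp
qed (use PL_mult in auto)

lemma PD_sum: "finite I \<Longrightarrow> (\<And>i. i \<in> I \<Longrightarrow> PD (g i)) \<Longrightarrow> PD (\<lambda>x. \<Sum>i\<in>I. g i x)"
proof (induction I rule: finite_induct)
  case empty then show ?case using PD_const[of 0] by simp
next
  case (insert a F) thus ?case using PD_add[of "g a" "\<lambda>x. \<Sum>i\<in>F. g i x"] by auto
qed

lemma PD_linear: "linear l \<Longrightarrow> PD l"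
  by (simp add: PD_def PL_linear D_linear)

lemma PD_quartic:
  assumes "homogeneous_quartic (\<theta> :: 'a::euclidean_space \<Rightarrow> real)"
  shows "PD \<theta>"
proof -
  obtain c where c: "\<And>x. \<theta> x = (\<Sum>b1\<in>Basis. \<Sum>b2\<in>Basis. \<Sum>b3\<in>Basis. \<Sum>b4\<in>Basis.
                 c b1 b2 b3 b4 * (x \<bullet> b1) * (x \<bullet> b2) * (x \<bullet> b3) * (x \<bullet> b4))"
    using assms unfolding homogeneous_quartic_def by blast
  have lin: "PD (\<lambda>x::'a. x \<bullet> b)" for b
    by (rule PD_linear) (simp add: bounded_linear_inner_left bounded_linear.linear)
  have "PD (\<lambda>x. \<Sum>b1\<in>Basis. \<Sum>b2\<in>Basis. \<Sum>b3\<in>Basis. \<Sum>b4\<in>Basis.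
                 c b1 b2 b3 b4 * (x \<bullet> b1) * (x \<bullet> b2) * (x \<bullet> b3) * (x \<bullet> b4))"
    by (intro PD_sum PD_mult PD_const lin finite_Basis)
  moreover have "\<theta> = (\<lambda>x. \<Sum>b1\<in>Basis. \<Sum>b2\<in>Basis. \<Sum>b3\<in>Basis. \<Sum>b4\<in>Basis.
                 c b1 b2 b3 b4 * (x \<bullet> b1) * (x \<bullet> b2) * (x \<bullet> b3) * (x \<bullet> b4))"
    using c by auto
  ultimately show ?thesis by simp
qed

lemma euler:
  fixes \<theta> :: "(real^'p) \<times> (real^'q) \<Rightarrow> real"
    and \<theta>k :: "nat \<Rightarrow> (real^'p) \<times> (real^'q) \<Rightarrow> real"
  assumes PD: "PD \<theta>"
    and theta_split: "\<And>\<xi> \<eta>. \<theta> (\<xi>, \<eta>) = (\<Sum>k\<le>4. \<theta>k k (\<xi>, \<eta>))"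
    and theta_bihom: "\<And>k s t \<xi> \<eta>. k \<le> 4 \<Longrightarrow>
                  \<theta>k k (s *\<^sub>R \<xi>, t *\<^sub>R \<eta>) = s ^ k * t ^ (4 - k) * \<theta>k k (\<xi>, \<eta>)"
  shows "(\<Sum>e\<in>Basis. (\<xi> \<bullet> e) * dderiv \<theta> (e, 0) (\<xi>, \<eta>)) = (\<Sum>k\<le>4. real k * \<theta>k k (\<xi>, \<eta>))"
    and "(\<Sum>e\<in>Basis. (\<eta> \<bullet> e) * dderiv \<theta> (0, e) (\<xi>, \<eta>)) = (\<Sum>k\<le>4. real (4 - k) * \<theta>k k (\<xi>, \<eta>))"
proof -
  have hs: "\<theta>k k (c *\<^sub>R x, y) = c ^ k * \<theta>k k (x, y)" if "k \<le> 4" for k c x y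
    using theta_bihom[OF that, of c x 1 y] by simp
  have ht: "\<theta>k k (x, c *\<^sub>R y) = c ^ (4 - k) * \<theta>k k (x, y)" if "k \<le> 4" for k c x y
    using theta_bihom[OF that, of 1 x c y] by simp
  have lin: "linear (\<lambda>v. dderiv \<theta> v (\<xi>, \<eta>))" using PD by (simp add: PD_def)
  have "(\<Sum>e\<in>Basis. (\<xi> \<bullet> e) * dderiv \<theta> (e, 0) (\<xi>, \<eta>)) = dderiv \<theta> (\<Sum>e\<in>Basis. (\<xi> \<bullet> e) *\<^sub>R (e, 0)) (\<xi>, \<eta>)"
  proof -
    have "(\<Sum>e\<in>Basis. (\<xi> \<bullet> e) * dderiv \<theta> (e, 0) (\<xi>, \<eta>)) = (\<Sum>e\<in>Basis. dderiv \<theta> ((\<xi> \<bullet> e) *\<^sub>R (e, 0)) (\<xi>, \<eta>))"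
      by (intro sum.cong refl) (simp add: linear_scale[OF lin] del: scaleR_Pair)
    also have "\<dots> = dderiv \<theta> (\<Sum>e\<in>Basis. (\<xi> \<bullet> e) *\<^sub>R (e, 0)) (\<xi>, \<eta>)"
      by (rule linear_sum[OF lin, symmetric])
    finally show ?thesis .
  qed
  also have "(\<Sum>e\<in>Basis. (\<xi> \<bullet> e) *\<^sub>R (e, 0::real^'q)) = (\<xi>, 0)"
    using euclidean_representation[of \<xi>] by (simp add: sum_prod)
  also have "dderiv \<theta> (\<xi>, 0) (\<xi>, \<eta>) = deriv (\<lambda>s. \<Sum>k\<le>4. (1 + s) ^ k * \<theta>k k (\<xi>, \<eta>)) 0"
  proof -
    have "\<theta> ((\<xi>, \<eta>) + s *\<^sub>R (\<xi>, 0)) = (\<Sum>k\<le>4. (1 + s) ^ k * \<theta>k k (\<xi>, \<eta>))" for s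
    proof -
      have "\<theta> ((\<xi>, \<eta>) + s *\<^sub>R (\<xi>, 0)) = (\<Sum>k\<le>4. \<theta>k k ((1 + s) *\<^sub>R \<xi>, \<eta>))"
        by (simp add: theta_split algebra_simps)
      also have "\<dots> = (\<Sum>k\<le>4. (1 + s) ^ k * \<theta>k k (\<xi>, \<eta>))"
        by (rule sum.cong) (auto simp: hs)
      finally show ?thesis .
    qed
    thus ?thesis by (simp add: dderiv_def)
  qed
  also have "\<dots> = (\<Sum>k\<le>4. real k * \<theta>k k (\<xi>, \<eta>))"
    by (rule DERIV_imp_deriv) (auto intro!: derivative_eq_intros)
  finally show "(\<Sum>e\<in>Basis. (\<xi> \<bullet> e) * dderiv \<theta> (e, 0) (\<xi>, \<eta>)) = (\<Sum>k\<le>4. real k * \<theta>k k (\<xi>, \<eta>))" .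
  have "(\<Sum>e\<in>Basis. (\<eta> \<bullet> e) * dderiv \<theta> (0, e) (\<xi>, \<eta>)) = dderiv \<theta> (\<Sum>e\<in>Basis. (\<eta> \<bullet> e) *\<^sub>R (0, e)) (\<xi>, \<eta>)"
  proof -
    have "(\<Sum>e\<in>Basis. (\<eta> \<bullet> e) * dderiv \<theta> (0, e) (\<xi>, \<eta>)) = (\<Sum>e\<in>Basis. dderiv \<theta> ((\<eta> \<bullet> e) *\<^sub>R (0, e)) (\<xi>, \<eta>))"
      by (intro sum.cong refl) (simp add: linear_scale[OF lin] del: scaleR_Pair)
    also have "\<dots> = dderiv \<theta> (\<Sum>e\<in>Basis. (\<eta> \<bullet> e) *\<^sub>R (0, e)) (\<xi>, \<eta>)"
      by (rule linear_sum[OF lin, symmetric])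
    finally show ?thesis .
  qed
  also have "(\<Sum>e\<in>Basis. (\<eta> \<bullet> e) *\<^sub>R (0::real^'p, e)) = (0, \<eta>)"
    using euclidean_representation[of \<eta>] by (simp add: sum_prod)
  also have "dderiv \<theta> (0, \<eta>) (\<xi>, \<eta>) = deriv (\<lambda>s. \<Sum>k\<le>4. (1 + s) ^ (4 - k) * \<theta>k k (\<xi>, \<eta>)) 0"
  proof -
    have "\<theta> ((\<xi>, \<eta>) + s *\<^sub>R (0, \<eta>)) = (\<Sum>k\<le>4. (1 + s) ^ (4 - k) * \<theta>k k (\<xi>, \<eta>))" for s
    proof -
      have "\<theta> ((\<xi>, \<eta>) + s *\<^sub>R (0, \<eta>)) = (\<Sum>k\<le>4. \<theta>k k (\<xi>, (1 + s) *\<^sub>R \<eta>))"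
        by (simp add: theta_split algebra_simps)
      also have "\<dots> = (\<Sum>k\<le>4. (1 + s) ^ (4 - k) * \<theta>k k (\<xi>, \<eta>))"
        by (rule sum.cong) (auto simp: ht)
      finally show ?thesis .
    qed
    thus ?thesis by (simp add: dderiv_def)
  qed
  also have "\<dots> = (\<Sum>k\<le>4. real (4 - k) * \<theta>k k (\<xi>, \<eta>))"
    by (rule DERIV_imp_deriv) (auto intro!: derivative_eq_intros)
  finally show "(\<Sum>e\<in>Basis. (\<eta> \<bullet> e) * dderiv \<theta> (0, e) (\<xi>, \<eta>)) = (\<Sum>k\<le>4. real (4 - k) * \<theta>k k (\<xi>, \<eta>))" .
qed


type_synonym ('p,'q) X = "(real^'p) \<times> (real^'q) \<times> real"

lemma PL_t[simp]: "PL (\<lambda>x::('p::finite,'q::finite) X. snd (snd x))" by (rule PL_linear[OF lin_t])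
lemma D_t[simp]: "dderiv (\<lambda>x::('p::finite,'q::finite) X. snd (snd x)) v x = snd (snd v)" by (rule D_linear[OF lin_t])
lemma Q_t[simp]: "Q (\<lambda>x::('p::finite,'q::finite) X. snd (snd x)) x v = 0" by (rule Q_linear[OF lin_t])
lemma PL_et[simp]: "PL (\<lambda>x::('p::finite,'q::finite) X. fst (snd x) $ i)" by (rule PL_linear[OF lin_etai])
lemma D_et[simp]: "dderiv (\<lambda>x::('p::finite,'q::finite) X. fst (snd x) $ i) v x = fst (snd v) $ i" by (rule D_linear[OF lin_etai])
lemma Q_et[simp]: "Q (\<lambda>x::('p::finite,'q::finite) X. fst (snd x) $ i) x v = 0" by (rule Q_linear[OF lin_etai])
lemma PL_XX[simp]: "PL (\<lambda>x::('p::finite,'q::finite) X. fst x \<bullet> fst x)" by (rule PL_inner[OF lin_fst lin_fst])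
lemma D_XX[simp]: "dderiv (\<lambda>x::('p::finite,'q::finite) X. fst x \<bullet> fst x) v x = fst x \<bullet> fst v + fst v \<bullet> fst x"
  by (rule D_inner[OF lin_fst lin_fst])
lemma Q_XX[simp]: "Q (\<lambda>x::('p::finite,'q::finite) X. fst x \<bullet> fst x) x v = 2 * (fst v \<bullet> fst v)"
  by (rule Q_inner[OF lin_fst lin_fst])
lemma PL_YY[simp]: "PL (\<lambda>x::('p::finite,'q::finite) X. fst (snd x) \<bullet> fst (snd x))" by (rule PL_inner[OF lin_eta lin_eta])
lemma D_YY[simp]: "dderiv (\<lambda>x::('p::finite,'q::finite) X. fst (snd x) \<bullet> fst (snd x)) v x = fst (snd x) \<bullet> fst (snd v) + fst (snd v) \<bullet> fst (snd x)"
  by (rule D_inner[OF lin_eta lin_eta])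
lemma Q_YY[simp]: "Q (\<lambda>x::('p::finite,'q::finite) X. fst (snd x) \<bullet> fst (snd x)) x v = 2 * (fst (snd v) \<bullet> fst (snd v))"
  by (rule Q_inner[OF lin_eta lin_eta])
lemma PL_BB[simp]: "PL (\<lambda>x::('p::finite,'q::finite) X. fst x \<bullet> ((A::real^'p^'p) *v fst x))" by (rule PL_inner[OF lin_fst lin_Afst])
lemma D_BB[simp]: "dderiv (\<lambda>x::('p::finite,'q::finite) X. fst x \<bullet> ((A::real^'p^'p) *v fst x)) v x = fst x \<bullet> (A *v fst v) + fst v \<bullet> (A *v fst x)"
  by (rule D_inner[OF lin_fst lin_Afst])
lemma Q_BB[simp]: "Q (\<lambda>x::('p::finite,'q::finite) X. fst x \<bullet> ((A::real^'p^'p) *v fst x)) x v = 2 * (fst v \<bullet> (A *v fst v))"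
  by (rule Q_inner[OF lin_fst lin_Afst])
lemma PL_CC[simp]: "PL (\<lambda>x::('p::finite,'q::finite) X. ((A::real^'p^'p) *v fst x) \<bullet> ((A'::real^'p^'p) *v fst x))" by (rule PL_inner[OF lin_Afst lin_Afst])
lemma D_CC[simp]: "dderiv (\<lambda>x::('p::finite,'q::finite) X. ((A::real^'p^'p) *v fst x) \<bullet> ((A'::real^'p^'p) *v fst x)) v x = (A *v fst x) \<bullet> (A' *v fst v) + (A *v fst v) \<bullet> (A' *v fst x)"
  by (rule D_inner[OF lin_Afst lin_Afst])
lemma Q_CC[simp]: "Q (\<lambda>x::('p::finite,'q::finite) X. ((A::real^'p^'p) *v fst x) \<bullet> ((A'::real^'p^'p) *v fst x)) x v = 2 * ((A *v fst v) \<bullet> (A' *v fst v))"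
  by (rule Q_inner[OF lin_Afst lin_Afst])

declare Q_sq[simp] Q_p4[simp]

definition Eexp :: "('q::finite \<Rightarrow> real^'p^'p) \<Rightarrow> ('p::finite,'q) X \<Rightarrow> real" where
  "Eexp A = (\<lambda>x. (snd (snd x)) ^ 4 + 2 * (fst x \<bullet> fst x - 3 * (fst (snd x) \<bullet> fst (snd x))) * (snd (snd x))\<^sup>2
     + 8 * (\<Sum>i\<in>UNIV. fst (snd x) $ i * (fst x \<bullet> (A i *v fst x))) * snd (snd x)
     + (fst (snd x) \<bullet> fst (snd x))\<^sup>2
     + (- 6 * (fst x \<bullet> fst x) * (fst (snd x) \<bullet> fst (snd x))
        + 8 * (\<Sum>i\<in>UNIV. \<Sum>k\<in>UNIV. fst (snd x) $ i * fst (snd x) $ k * ((A i *v fst x) \<bullet> (A k *v fst x))))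
     + ((fst x \<bullet> fst x)\<^sup>2 - 2 * (\<Sum>j\<in>UNIV. (fst x \<bullet> (A j *v fst x))\<^sup>2)))"

lemma PL_Eexp: "PL (Eexp A)"
  unfolding Eexp_def by simp

lemma Q_Eexp_xi:
  fixes A :: "'q::finite \<Rightarrow> real^'p::finite^'p"
  shows "Q (Eexp A) ((\<xi>, \<eta>, t) :: ('p,'q) X) (e, 0, 0) = 
     4*t\<^sup>2*(e \<bullet> e) + 16*t*(\<Sum>i\<in>UNIV. \<eta>$i*(e \<bullet> (A i *v e))) - 12*(e \<bullet> e)*(\<eta> \<bullet> \<eta>)
     + 16*(\<Sum>i\<in>UNIV. \<Sum>k\<in>UNIV. \<eta>$i*\<eta>$k*((A i *v e) \<bullet> (A k *v e))) + 4*(\<xi> \<bullet> \<xi>)*(e \<bullet> e) + 8*(\<xi> \<bullet> e)\<^sup>2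
     - 2*(\<Sum>j\<in>UNIV. 4*(\<xi> \<bullet> (A j *v \<xi>))*(e \<bullet> (A j *v e)) + 2*(\<xi> \<bullet> (A j *v e) + e \<bullet> (A j *v \<xi>))\<^sup>2)"
  unfolding Eexp_def
  using inner_commute[of e \<xi>]
  by (simp add: sum.distrib sum_distrib_left sum_distrib_right mult.assoc power2_eq_square algebra_simps)


lemma Q_Eexp_eta:
  fixes A :: "'q::finite \<Rightarrow> real^'p::finite^'p"
  shows "Q (Eexp A) ((\<xi>, \<eta>, t) :: ('p,'q) X) (0, e, 0) = 
     -12*t\<^sup>2*(e \<bullet> e) + 4*(\<eta> \<bullet> \<eta>)*(e \<bullet> e) + 8*(\<eta> \<bullet> e)\<^sup>2 - 12*(\<xi> \<bullet> \<xi>)*(e \<bullet> e)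
     + 16*(\<Sum>i\<in>UNIV. \<Sum>k\<in>UNIV. e$i*e$k*((A i *v \<xi>) \<bullet> (A k *v \<xi>)))"
  unfolding Eexp_def
  using inner_commute[of e \<eta>]
  by (simp add: sum.distrib sum_distrib_left sum_distrib_right mult.assoc power2_eq_square algebra_simps)

lemma Q_Eexp_t:
  fixes A :: "'q::finite \<Rightarrow> real^'p::finite^'p"
  shows "Q (Eexp A) ((\<xi>, \<eta>, t) :: ('p,'q) X) (0, 0, 1) = 12*t\<^sup>2 + 4*(\<xi> \<bullet> \<xi> - 3*(\<eta> \<bullet> \<eta>))"
  unfolding Eexp_def
  by (simp add: sum.distrib sum_distrib_left sum_distrib_right mult.assoc power2_eq_square algebra_simps)

definition Gf :: "('q::finite \<Rightarrow> real^'p^'p) \<Rightarrow> ('p::finite,'q) X \<Rightarrow> real" where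
  "Gf A = (\<lambda>x. (snd (snd x)) ^ 4 + 2 * (fst x \<bullet> fst x - 3 * (fst (snd x) \<bullet> fst (snd x))) * (snd (snd x))\<^sup>2
     + 8 * (\<Sum>i\<in>UNIV. fst (snd x) $ i * (fst x \<bullet> (A i *v fst x))) * snd (snd x))"

lemma PL_Gf: "PL (Gf A)"
  unfolding Gf_def by simp

lemma D_Gf_xi:
  fixes A :: "'q::finite \<Rightarrow> real^'p::finite^'p"
  shows "dderiv (Gf A) (e, 0, 0) ((\<xi>, \<eta>, t) :: ('p,'q) X) =
     2*(\<xi> \<bullet> e + e \<bullet> \<xi>)*t\<^sup>2 + 8*(\<Sum>i\<in>UNIV. \<eta>$i*(\<xi> \<bullet> (A i *v e) + e \<bullet> (A i *v \<xi>)))*t"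
  unfolding Gf_def
  by (simp add: sum.distrib sum_distrib_left sum_distrib_right mult.assoc power2_eq_square algebra_simps)

lemma D_Gf_eta:
  fixes A :: "'q::finite \<Rightarrow> real^'p::finite^'p"
  shows "dderiv (Gf A) (0, e, 0) ((\<xi>, \<eta>, t) :: ('p,'q) X) =
     -6*(\<eta> \<bullet> e + e \<bullet> \<eta>)*t\<^sup>2 + 8*(\<Sum>i\<in>UNIV. e$i*(\<xi> \<bullet> (A i *v \<xi>)))*t"
  unfolding Gf_def
  by (simp add: sum.distrib sum_distrib_left sum_distrib_right mult.assoc power2_eq_square algebra_simps)

lemma D_Gf_t:
  fixes A :: "'q::finite \<Rightarrow> real^'p::finite^'p"
  shows "dderiv (Gf A) (0, 0, 1) ((\<xi>, \<eta>, t) :: ('p,'q) X) =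
     4*t^3 + 4*(\<xi> \<bullet> \<xi> - 3*(\<eta> \<bullet> \<eta>))*t + 8*(\<Sum>i\<in>UNIV. \<eta>$i*(\<xi> \<bullet> (A i *v \<xi>)))"
  unfolding Gf_def
  by (simp add: sum.distrib sum_distrib_left sum_distrib_right mult.assoc power2_eq_square power3_eq_cube algebra_simps)

lemma D_comp_lin: "linear L \<Longrightarrow> dderiv (\<lambda>x. g (L x)) v x = dderiv g (L v) (L x)"
  by (simp add: dderiv_def linear_add linear_scale)

lemma Q_comp_aff: "linear L \<Longrightarrow> Q (\<lambda>x. g (c + L x)) x v = Q g (c + L x) (L v)"
proof -
  assume L: "linear L"
  have "dderiv (\<lambda>x. g (c + L x)) v (x + s *\<^sub>R v) = dderiv g (L v) (c + L x + s *\<^sub>R L v)" for s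
    using L by (simp add: dderiv_def linear_add linear_scale algebra_simps)
  thus ?thesis by (simp add: Q_def dderiv_def[of "dderiv _ _"])
qed


lemma mv_axis: "((A::real^'n^'m) *v axis j 1) $ a = A $ a $ j"
  by (simp add: matrix_vector_mult_def axis_def if_distrib cong: if_cong)

lemma tr_basis: "(\<Sum>e\<in>Basis. e \<bullet> ((A::real^'n^'n) *v e)) = trace A"
  by (simp add: sum_Basis_cart inner_axis' mv_axis trace_def)

lemma frob: "transpose (M::real^'n^'n) = M \<Longrightarrow> (\<Sum>e\<in>Basis. (M *v e) \<bullet> (M *v e)) = trace (M ** M)"
proof -
  assume sym: "transpose M = M"
  have s: "M $ j $ a = M $ a $ j" for j a using sym by (metis transpose_def vec_lambda_beta)
  show ?thesis
    by (simp add: sum_Basis_cart inner_vec_def mv_axis trace_def matrix_matrix_mult_def s)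
qed

lemma sumsq_basis: "(\<Sum>e\<in>Basis. (v \<bullet> e)\<^sup>2) = v \<bullet> (v::'a::euclidean_space)"
  by (simp add: euclidean_inner[of v v] power2_eq_square)

lemma card_basis_sum: "(\<Sum>e\<in>(Basis::(real^'n) set). e \<bullet> e) = real CARD('n)"
proof -
  have "(\<Sum>e\<in>(Basis::(real^'n) set). e \<bullet> e) = (\<Sum>e\<in>(Basis::(real^'n) set). 1)"
    by (rule sum.cong) auto
  thus ?thesis by simp
qed

lemma transpose_sum_scale: "transpose (\<Sum>i\<in>UNIV. c i *\<^sub>R (A i::real^'n^'n)) = (\<Sum>i\<in>UNIV. c i *\<^sub>R transpose (A i))"
  by (simp add: vec_eq_iff transpose_def sum_component)

lemma axis_sum: "(\<Sum>i\<in>UNIV. (axis j (1::real) :: real^'n) $ i * g i) = g j"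
proof -
  have "(\<Sum>i\<in>UNIV. (axis j (1::real) :: real^'n) $ i * g i) = (\<Sum>i\<in>UNIV. if i = j then g j else 0)"
    by (rule sum.cong) (auto simp: axis_def)
  thus ?thesis by simp
qed

lemma axis_sum2: "(\<Sum>i\<in>UNIV. \<Sum>k\<in>UNIV. (axis j (1::real) :: real^'n) $ i * (axis j 1 :: real^'n) $ k * g i k) = g j j"
proof -
  have "(\<Sum>i\<in>UNIV. \<Sum>k\<in>UNIV. (axis j (1::real) :: real^'n) $ i * (axis j 1 :: real^'n) $ k * g i k)
      = (\<Sum>i\<in>UNIV. (axis j (1::real) :: real^'n) $ i * (\<Sum>k\<in>UNIV. (axis j 1 :: real^'n) $ k * g i k))"
    by (simp add: sum_distrib_left mult.assoc)
  also have "\<dots> = g j j" by (simp add: axis_sum)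
  finally show ?thesis .
qed

lemma linear_pair2: "linear (\<lambda>x::('p::finite,'q::finite) X. (fst x, fst (snd x)))"
  by (rule linearI) auto

theorem lemma3p4:
  fixes f :: "(real^('p::finite)) \<times> (real^('q::finite)) \<times> real \<Rightarrow> real"
    and \<theta> :: "(real^'p) \<times> (real^'q) \<Rightarrow> real"
    and \<theta>k :: "nat \<Rightarrow> (real^'p) \<times> (real^'q) \<Rightarrow> real"
    and A :: "'q \<Rightarrow> real^'p^'p"
    and \<nu> :: nat
  assumes q2: "CARD('q) \<ge> 2"
    and A_sym: "\<And>i. transpose (A i) = A i"
    and A_sim: "\<And>\<eta>::real^'q. \<eta> \<noteq> 0 \<Longrightarrow>
                  sign_diag_similar \<nu> (norm \<eta>) (\<Sum>i\<in>UNIV. \<eta> $ i *\<^sub>R A i)"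
    and theta_quartic: "homogeneous_quartic \<theta>"
    and f_def: "\<And>\<xi> \<eta> t. f (\<xi>, \<eta>, t) =
                  t ^ 4 + 2 * ((norm \<xi>)\<^sup>2 - 3 * (norm \<eta>)\<^sup>2) * t\<^sup>2
                  + 8 * (\<xi> \<bullet> ((\<Sum>i\<in>UNIV. \<eta> $ i *\<^sub>R A i) *v \<xi>)) * t + \<theta> (\<xi>, \<eta>)"
    and grad: "\<And>x. grad_norm2 f x = 16 * (norm x) ^ 6"
    and theta_split: "\<And>\<xi> \<eta>. \<theta> (\<xi>, \<eta>) = (\<Sum>k\<le>4. \<theta>k k (\<xi>, \<eta>))"
    and theta_bihom: "\<And>k s t \<xi> \<eta>. k \<le> 4 \<Longrightarrow>
                  \<theta>k k (s *\<^sub>R \<xi>, t *\<^sub>R \<eta>) = s ^ k * t ^ (4 - k) * \<theta>k k (\<xi>, \<eta>)"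
  shows "\<And>\<xi> \<eta> t. laplacian f (\<xi>, \<eta>, t) =
           4 * (real CARD('p) - 3 * real CARD('q) + 3) * (t\<^sup>2 + (norm \<xi>)\<^sup>2)
           + 4 * (8 * real \<nu> - 1 + real CARD('q) - 3 * real CARD('p)) * (norm \<eta>)\<^sup>2
           + laplacian (\<lambda>\<xi>'. \<theta>k 3 (\<xi>', \<eta>)) \<xi>"
proof -
  define M where "M \<eta> = (\<Sum>i\<in>UNIV. \<eta> $ i *\<^sub>R A i)" for \<eta>
  have PDt: "PD \<theta>" by (rule PD_quartic[OF theta_quartic])
  have PLt: "PL \<theta>" by (rule PD_PL[OF PDt])
  have PLTh: "PL (\<lambda>x::('p,'q) X. \<theta> (fst x, fst (snd x)))"
    by (rule PL_comp[OF PLt linear_pair2])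
  have psi: "\<xi> \<bullet> (M \<eta> *v \<xi>) = (\<Sum>i\<in>UNIV. \<eta> $ i * (\<xi> \<bullet> (A i *v \<xi>)))" for \<xi> \<eta>
    by (simp add: M_def mv_sum inner_sum_right)
  have f_eq: "f = (\<lambda>x. Gf A x + \<theta> (fst x, fst (snd x)))"
  proof
    fix x :: "('p,'q) X"
    obtain \<xi> \<eta> t where x: "x = (\<xi>, \<eta>, t)" by (cases x) auto
    show "f x = Gf A x + \<theta> (fst x, fst (snd x))"
      unfolding x f_def Gf_def using psi[of \<xi> \<eta>]
      by (simp add: M_def power2_norm_eq_inner)
  qed
  have PLf: "PL f" unfolding f_eq by (intro PL_add PL_Gf PLTh)
  have symm: "\<xi> \<bullet> (A i *v e) = e \<bullet> (A i *v \<xi>)" for i e \<xi>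
    using sym_inner[OF A_sym[of i], of \<xi> e] by (simp add: inner_commute)
  define W where "W \<xi> \<eta> = (\<Sum>i\<in>UNIV. \<Sum>k\<in>UNIV. \<eta>$i * \<eta>$k * ((A i *v \<xi>) \<bullet> (A k *v \<xi>)))" for \<xi> \<eta>
  define SB where "SB \<xi> = (\<Sum>j\<in>UNIV. (\<xi> \<bullet> (A j *v \<xi>))\<^sup>2)" for \<xi>
  have Df: "dderiv f b (\<xi>, \<eta>, t) = dderiv (Gf A) b (\<xi>, \<eta>, t) + dderiv \<theta> (fst b, fst (snd b)) (\<xi>, \<eta>)" for b \<xi> \<eta> t
    unfolding f_eq using D_comp_lin[OF linear_pair2, of \<theta>] by (simp add: PL_Gf PLTh)
  have KEY: "(\<Sum>k\<le>4. (32 * real k - 96) * \<theta>k k (\<xi>, \<eta>)) = 32*(\<xi> \<bullet> \<xi>)\<^sup>2 + 192*(\<xi> \<bullet> \<xi>)*(\<eta> \<bullet> \<eta>) - 96*(\<eta> \<bullet> \<eta>)\<^sup>2 - 256 * W \<xi> \<eta> - 64 * SB \<xi>"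
    for \<xi> \<eta>
  proof -
    define mm where "mm e = (\<Sum>i\<in>UNIV. \<eta>$i * (e \<bullet> (A i *v \<xi>)))" for e
    define \<alpha> where "\<alpha> e = 4 * (\<xi> \<bullet> e)" for e
    define \<beta> where "\<beta> e = 16 * mm e" for e
    define \<gamma> where "\<gamma> e = dderiv \<theta> (e, 0) (\<xi>, \<eta>)" for e
    define \<alpha>' where "\<alpha>' e = -12 * (\<eta> \<bullet> e)" for e
    define \<beta>' where "\<beta>' (e::real^'q) = 8 * (\<Sum>i\<in>UNIV. e$i * (\<xi> \<bullet> (A i *v \<xi>)))" for e
    define \<gamma>' where "\<gamma>' e = dderiv \<theta> (0, e) (\<xi>, \<eta>)" for e
    define c1 where "c1 = 4 * (\<xi> \<bullet> \<xi> - 3 * (\<eta> \<bullet> \<eta>))"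
    define c0 where "c0 = 8 * (\<Sum>i\<in>UNIV. \<eta>$i * (\<xi> \<bullet> (A i *v \<xi>)))"
    have dx: "dderiv f (e, 0, 0) (\<xi>, \<eta>, t) = \<alpha> e * t\<^sup>2 + \<beta> e * t + \<gamma> e" for e t
      unfolding Df D_Gf_xi \<alpha>_def \<beta>_def \<gamma>_def mm_def
      by (simp add: symm inner_commute[of e \<xi>] sum.distrib sum_distrib_left algebra_simps)
    have dy: "dderiv f (0, e, 0) (\<xi>, \<eta>, t) = \<alpha>' e * t\<^sup>2 + \<beta>' e * t + \<gamma>' e" for e t
      unfolding Df D_Gf_eta \<alpha>'_def \<beta>'_def \<gamma>'_def
      by (simp add: inner_commute[of e \<eta>] algebra_simps)
    have dt: "dderiv f (0, 0, 1) (\<xi>, \<eta>, t) = 4 * t ^ 3 + c1 * t + c0" for t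
      unfolding Df D_Gf_t c1_def c0_def
      using dderiv_def[of \<theta> "(0,0)" "(\<xi>,\<eta>)"] by simp
    have "(\<Sum>e\<in>Basis. (\<alpha> e * t\<^sup>2 + \<beta> e * t + \<gamma> e)\<^sup>2) + (\<Sum>e\<in>Basis. (\<alpha>' e * t\<^sup>2 + \<beta>' e * t + \<gamma>' e)\<^sup>2)
     + (4 * t ^ 3 + c1 * t + c0)\<^sup>2 = 16 * (t\<^sup>2 + (\<xi> \<bullet> \<xi> + \<eta> \<bullet> \<eta>)) ^ 3" for t
    proof -
      have "grad_norm2 f (\<xi>, \<eta>, t) = 16 * (norm (\<xi>, \<eta>, t)) ^ 6" by (rule grad)
      moreover have "grad_norm2 f (\<xi>, \<eta>, t) = (\<Sum>e\<in>Basis. (\<alpha> e * t\<^sup>2 + \<beta> e * t + \<gamma> e)\<^sup>2) + (\<Sum>e\<in>Basis. (\<alpha>' e * t\<^sup>2 + \<beta>' e * t + \<gamma>' e)\<^sup>2)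
     + (4 * t ^ 3 + c1 * t + c0)\<^sup>2"
        unfolding grad_norm2_def sum_Basis_X dx dy dt ..
      moreover have "(norm (\<xi>, \<eta>, t)) ^ 6 = (t\<^sup>2 + (\<xi> \<bullet> \<xi> + \<eta> \<bullet> \<eta>)) ^ 3"
      proof -
        have "(norm (\<xi>, \<eta>, t))\<^sup>2 = t\<^sup>2 + (\<xi> \<bullet> \<xi> + \<eta> \<bullet> \<eta>)"
          by (simp add: norm_Pair power2_norm_eq_inner)
        moreover have "(norm (\<xi>, \<eta>, t)) ^ 6 = ((norm (\<xi>, \<eta>, t))\<^sup>2) ^ 3" by (simp add: power_mult[symmetric])
        ultimately show ?thesis by simp
      qed
      ultimately show ?thesis by simp
    qed
    from t2_coeff[OF finite_Basis finite_Basis this]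
    have T2: "(\<Sum>e\<in>Basis. (\<beta> e)\<^sup>2 + 2 * \<alpha> e * \<gamma> e) + (\<Sum>e\<in>Basis. (\<beta>' e)\<^sup>2 + 2 * \<alpha>' e * \<gamma>' e) + c1\<^sup>2 = 48 * (\<xi> \<bullet> \<xi> + \<eta> \<bullet> \<eta>)\<^sup>2" .
    have e1: "(\<Sum>e\<in>Basis. (\<beta> e)\<^sup>2) = 256 * W \<xi> \<eta>"
    proof -
      define V where "V = (\<Sum>i\<in>UNIV. \<eta>$i *\<^sub>R (A i *v \<xi>))"
      have "mm e = V \<bullet> e" for e unfolding inner_commute[of V e] by (simp add: mm_def V_def inner_sum_right)
      hence "(\<Sum>e\<in>Basis. (\<beta> e)\<^sup>2) = 256 * (\<Sum>e\<in>Basis. (V \<bullet> e)\<^sup>2)"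
        by (simp add: \<beta>_def power_mult_distrib sum_distrib_left)
      also have "\<dots> = 256 * (V \<bullet> V)" by (simp add: sumsq_basis)
      also have "V \<bullet> V = W \<xi> \<eta>" 
        by (simp add: V_def W_def inner_sum_left inner_sum_right sum_distrib_left algebra_simps) (simp add: inner_commute)
      finally show ?thesis .
    qed
    have e2: "(\<Sum>e\<in>Basis. 2 * \<alpha> e * \<gamma> e) = 8 * (\<Sum>k\<le>4. real k * \<theta>k k (\<xi>, \<eta>))"
      using euler(1)[OF PDt theta_split theta_bihom, of \<xi> \<eta>]
      by (simp add: \<alpha>_def \<gamma>_def mult.assoc flip: sum_distrib_left)
    have e3: "(\<Sum>e\<in>Basis. (\<beta>' e)\<^sup>2) = 64 * SB \<xi>"
      by (simp add: \<beta>'_def SB_def sum_Basis_cart power_mult_distrib sum_distrib_left axis_sum flip: sum_distrib_left)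
    have e4: "(\<Sum>e\<in>Basis. 2 * \<alpha>' e * \<gamma>' e) = -24 * (\<Sum>k\<le>4. real (4 - k) * \<theta>k k (\<xi>, \<eta>))"
      using euler(2)[OF PDt theta_split theta_bihom, of \<eta> \<xi>]
      by (simp add: \<alpha>'_def \<gamma>'_def mult.assoc sum_negf flip: sum_distrib_left)
    have "(\<Sum>k\<le>4. (32 * real k - 96) * \<theta>k k (\<xi>, \<eta>)) = 8 * (\<Sum>k\<le>4. real k * \<theta>k k (\<xi>, \<eta>)) - 24 * (\<Sum>k\<le>4. real (4 - k) * \<theta>k k (\<xi>, \<eta>))"
      by (simp add: atMost_Suc eval_nat_numeral algebra_simps)
    thus ?thesis using T2 e1 e2 e3 e4 unfolding c1_def
      by (simp add: sum.distrib algebra_simps power2_eq_square)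
  qed
  have hs: "\<theta>k k (c *\<^sub>R x, y) = c ^ k * \<theta>k k (x, y)" if "k \<le> 4" for k c x y
    using theta_bihom[OF that, of c x 1 y] by simp
  have ht: "\<theta>k k (x, c *\<^sub>R y) = c ^ (4 - k) * \<theta>k k (x, y)" if "k \<le> 4" for k c x y
    using theta_bihom[OF that, of 1 x c y] by simp
  have TH: "\<theta>k 0 (\<xi>, \<eta>) = (\<eta> \<bullet> \<eta>)\<^sup>2 \<and> \<theta>k 1 (\<xi>, \<eta>) = 0 \<and>
      \<theta>k 2 (\<xi>, \<eta>) = -6 * (\<xi> \<bullet> \<xi>) * (\<eta> \<bullet> \<eta>) + 8 * W \<xi> \<eta> \<and>
      \<theta>k 4 (\<xi>, \<eta>) = (\<xi> \<bullet> \<xi>)\<^sup>2 - 2 * SB \<xi>" for \<xi> \<eta>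
  proof -
    have Ws: "W (s *\<^sub>R \<xi>) \<eta> = s\<^sup>2 * W \<xi> \<eta>" for s
      by (simp add: W_def matrix_vector_mult_scaleR sum_distrib_left power2_eq_square algebra_simps)
    have SBs: "SB (s *\<^sub>R \<xi>) = s ^ 4 * SB \<xi>" for s
      by (simp add: SB_def matrix_vector_mult_scaleR sum_distrib_left power2_eq_square eval_nat_numeral algebra_simps)
    have "(\<Sum>k\<le>4. ((32 * real k - 96) * \<theta>k k (\<xi>, \<eta>)) * s ^ k) =
       (-96 * (\<eta> \<bullet> \<eta>)\<^sup>2) + (192 * (\<xi> \<bullet> \<xi>) * (\<eta> \<bullet> \<eta>) - 256 * W \<xi> \<eta>) * s\<^sup>2 + (32 * (\<xi> \<bullet> \<xi>)\<^sup>2 - 64 * SB \<xi>) * s ^ 4" for s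
    proof -
      have "(\<Sum>k\<le>4. ((32 * real k - 96) * \<theta>k k (\<xi>, \<eta>)) * s ^ k) = (\<Sum>k\<le>4. (32 * real k - 96) * \<theta>k k (s *\<^sub>R \<xi>, \<eta>))"
        by (rule sum.cong) (auto simp: hs)
      also have "\<dots> = 32*((s *\<^sub>R \<xi>) \<bullet> (s *\<^sub>R \<xi>))\<^sup>2 + 192*((s *\<^sub>R \<xi>) \<bullet> (s *\<^sub>R \<xi>))*(\<eta> \<bullet> \<eta>) - 96*(\<eta> \<bullet> \<eta>)\<^sup>2 - 256 * W (s *\<^sub>R \<xi>) \<eta> - 64 * SB (s *\<^sub>R \<xi>)"
        by (rule KEY)
      also have "\<dots> = (-96 * (\<eta> \<bullet> \<eta>)\<^sup>2) + (192 * (\<xi> \<bullet> \<xi>) * (\<eta> \<bullet> \<eta>) - 256 * W \<xi> \<eta>) * s\<^sup>2 + (32 * (\<xi> \<bullet> \<xi>)\<^sup>2 - 64 * SB \<xi>) * s ^ 4"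
        by (simp add: Ws SBs algebra_simps power2_eq_square eval_nat_numeral)
      finally show ?thesis .
    qed
    note c = s_coeffs[of "\<lambda>k. (32 * real k - 96) * \<theta>k k (\<xi>, \<eta>)", OF this]
    show ?thesis using c(1,2,3,5) by (simp add: algebra_simps)
  qed
  have f_eq2: "f = (\<lambda>x. Eexp A x + \<theta>k 3 (fst x, fst (snd x)))"
  proof
    fix x :: "('p,'q) X"
    obtain \<xi> \<eta> t where x: "x = (\<xi>, \<eta>, t)" by (cases x) auto
    have th: "\<theta> (\<xi>, \<eta>) = \<theta>k 0 (\<xi>, \<eta>) + \<theta>k 1 (\<xi>, \<eta>) + \<theta>k 2 (\<xi>, \<eta>) + \<theta>k 3 (\<xi>, \<eta>) + \<theta>k 4 (\<xi>, \<eta>)"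
      by (simp add: theta_split atMost_Suc eval_nat_numeral algebra_simps)
    show "f x = Eexp A x + \<theta>k 3 (fst x, fst (snd x))"
      unfolding f_eq x using th TH[of \<xi> \<eta>]
      by (simp add: Gf_def Eexp_def W_def SB_def algebra_simps)
  qed
  define T3 where "T3 = (\<lambda>x::('p,'q) X. \<theta>k 3 (fst x, fst (snd x)))"
  have f_eq3: "f = (\<lambda>x. Eexp A x + T3 x)" using f_eq2 by (simp add: T3_def)
  have PLT3: "PL T3"
  proof -
    have "T3 = (\<lambda>x. f x - Eexp A x)" using f_eq3 by auto
    thus ?thesis using PL_diff[OF PLf PL_Eexp] by simp
  qed
  have PL3: "PL (\<theta>k 3)"
  proof -
    have lin: "linear (\<lambda>z::(real^'p) \<times> (real^'q). (fst z, snd z, 0::real))" by (rule linearI) auto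
    have "\<theta>k 3 = (\<lambda>z. T3 (fst z, snd z, 0))" by (simp add: T3_def)
    thus ?thesis using PL_comp[OF PLT3 lin] by simp
  qed
  have QT3: "Q T3 (\<xi>, \<eta>, t) v = Q (\<theta>k 3) (\<xi>, \<eta>) (fst v, fst (snd v))" for \<xi> \<eta> t v
    using Q_comp_aff[OF linear_pair2, of "\<theta>k 3" 0 "(\<xi>, \<eta>, t)" v] by (simp add: T3_def)
  have Q3xi: "Q (\<lambda>y. \<theta>k 3 (y, \<eta>)) \<xi> e = Q (\<theta>k 3) (\<xi>, \<eta>) (e, 0)" for \<xi> \<eta> e
  proof -
    have lin: "linear (\<lambda>y::real^'p. (y, 0::real^'q))" by (rule linearI) auto
    show ?thesis using Q_comp_aff[OF lin, of "\<theta>k 3" "(0, \<eta>)" \<xi> e] by simp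
  qed
  have Q3eta: "Q (\<theta>k 3) (\<xi>, \<eta>) (0, e) = 0" for \<xi> \<eta> e
  proof -
    have lin: "linear (\<lambda>y::real^'q. (0::real^'p, y))" by (rule linearI) auto
    have "Q (\<theta>k 3) (\<xi>, \<eta>) (0, e) = Q (\<lambda>y. \<theta>k 3 ((\<xi>, 0) + (0, y))) \<eta> e"
      using Q_comp_aff[OF lin, of "\<theta>k 3" "(\<xi>, 0)" \<eta> e] by simp
    also have "\<dots> = 0"
    proof (rule hom1_Q)
      show "PL (\<lambda>y. \<theta>k 3 ((\<xi>, 0) + (0, y)))" by (rule PL_affine[OF PL3 lin])
      show "\<theta>k 3 ((\<xi>, 0) + (0, c *\<^sub>R y)) = c * \<theta>k 3 ((\<xi>, 0) + (0, y))" for c y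
        using ht[of 3 \<xi> c y] by simp
    qed
    finally show ?thesis .
  qed
  have Q3t: "Q (\<theta>k 3) z (0, 0) = 0" for z
    by (rule Q_const_dir) (simp add: zero_prod_def[symmetric])
  have Mtr: "transpose (M \<eta>) = M \<eta>" for \<eta>
    by (simp add: M_def transpose_sum_scale A_sym)
  have trA: "trace (A i) = 0" for i
  proof -
    have "M (axis i 1) = A i"
    proof -
      have "M (axis i 1) = (\<Sum>k\<in>UNIV. if k = i then A i else 0)"
        unfolding M_def by (rule sum.cong) (auto simp: axis_def)
      thus ?thesis by simp
    qed
    moreover have "sign_diag_similar \<nu> (norm (axis i (1::real) :: real^'q)) (M (axis i 1))"
      unfolding M_def by (rule A_sim) simp
    ultimately show ?thesis using sign_diag_trace(1) by auto
  qed
  have trM2: "trace (M \<eta> ** M \<eta>) = 2 * real \<nu> * (\<eta> \<bullet> \<eta>)" for \<eta>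
  proof (cases "\<eta> = 0")
    case True
    then show ?thesis by (simp add: M_def trace_def)
  next
    case False
    then show ?thesis using sign_diag_trace(2)[OF A_sim[OF False]] by (simp add: M_def power2_norm_eq_inner)
  qed
  show "\<And>\<xi> \<eta> t. ?thesis \<xi> \<eta> t"
  proof -
    fix \<xi> :: "real^'p" and \<eta> :: "real^'q" and t :: real
    define CC where "CC j = (A j *v \<xi>) \<bullet> (A j *v \<xi>)" for j
    have L1: "laplacian f (\<xi>, \<eta>, t) = (\<Sum>e\<in>Basis. Q (Eexp A) (\<xi>, \<eta>, t) (e, 0, 0)) + (\<Sum>e\<in>Basis. Q (Eexp A) (\<xi>, \<eta>, t) (0, e, 0))
        + Q (Eexp A) (\<xi>, \<eta>, t) (0, 0, 1) + laplacian (\<lambda>\<xi>'. \<theta>k 3 (\<xi>', \<eta>)) \<xi>"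
    proof -
      have "laplacian f (\<xi>, \<eta>, t) = (\<Sum>b\<in>Basis. Q (Eexp A) (\<xi>, \<eta>, t) b + Q T3 (\<xi>, \<eta>, t) b)"
        unfolding laplacian_def Q_def[symmetric] f_eq3 by (intro sum.cong refl Q_add[OF PL_Eexp PLT3])
      also have "\<dots> = (\<Sum>b\<in>Basis. Q (Eexp A) (\<xi>, \<eta>, t) b) + (\<Sum>b\<in>Basis. Q T3 (\<xi>, \<eta>, t) b)"
        by (rule sum.distrib)
      also have "(\<Sum>b\<in>Basis. Q T3 (\<xi>, \<eta>, t) b) = laplacian (\<lambda>\<xi>'. \<theta>k 3 (\<xi>', \<eta>)) \<xi>"
        unfolding sum_Basis_X laplacian_def Q_def[symmetric] QT3 Q3xi
        by (simp add: Q3eta Q3t)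
      finally show ?thesis by (simp add: sum_Basis_X)
    qed
    show "laplacian f (\<xi>, \<eta>, t) =
           4 * (real CARD('p) - 3 * real CARD('q) + 3) * (t\<^sup>2 + (norm \<xi>)\<^sup>2)
           + 4 * (8 * real \<nu> - 1 + real CARD('q) - 3 * real CARD('p)) * (norm \<eta>)\<^sup>2
           + laplacian (\<lambda>\<xi>'. \<theta>k 3 (\<xi>', \<eta>)) \<xi>"
    proof -
      have a1: "(\<Sum>e\<in>(Basis::(real^'p) set). e \<bullet> e) = real CARD('p)" by (rule card_basis_sum)
      have a2: "(\<Sum>e\<in>(Basis::(real^'p) set). \<Sum>i\<in>UNIV. \<eta>$i*(e \<bullet> (A i *v e))) = 0"
        by (subst sum.swap) (simp add: tr_basis trA flip: sum_distrib_left)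
      have a3: "(\<Sum>e\<in>(Basis::(real^'p) set). \<Sum>i\<in>UNIV. \<Sum>k\<in>UNIV. \<eta>$i*\<eta>$k*((A i *v e) \<bullet> (A k *v e))) = 2 * real \<nu> * (\<eta> \<bullet> \<eta>)"
      proof -
        have "(\<Sum>i\<in>UNIV. \<Sum>k\<in>UNIV. \<eta>$i*\<eta>$k*((A i *v e) \<bullet> (A k *v e))) = (M \<eta> *v e) \<bullet> (M \<eta> *v e)" for e
          by (simp add: M_def mv_sum inner_sum_left inner_sum_right sum_distrib_left algebra_simps) (simp add: inner_commute)
        hence "(\<Sum>e\<in>(Basis::(real^'p) set). \<Sum>i\<in>UNIV. \<Sum>k\<in>UNIV. \<eta>$i*\<eta>$k*((A i *v e) \<bullet> (A k *v e)))
           = (\<Sum>e\<in>Basis. (M \<eta> *v e) \<bullet> (M \<eta> *v e))" by simp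
        also have "\<dots> = trace (M \<eta> ** M \<eta>)" by (rule frob[OF Mtr])
        finally show ?thesis using trM2 by simp
      qed
      have a4: "(\<Sum>e\<in>(Basis::(real^'p) set). (\<xi> \<bullet> e)\<^sup>2) = \<xi> \<bullet> \<xi>" by (rule sumsq_basis)
      have a5a: "(\<Sum>e\<in>(Basis::(real^'p) set). \<Sum>j\<in>UNIV. 4*(\<xi> \<bullet> (A j *v \<xi>))*(e \<bullet> (A j *v e))) = 0"
        by (subst sum.swap) (simp add: tr_basis trA mult.assoc flip: sum_distrib_left)
      have a5b: "(\<Sum>e\<in>(Basis::(real^'p) set). \<Sum>j\<in>UNIV. (\<xi> \<bullet> (A j *v e) + e \<bullet> (A j *v \<xi>))\<^sup>2) = 4 * (\<Sum>j\<in>UNIV. CC j)"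
      proof -
        have "(\<Sum>e\<in>(Basis::(real^'p) set). \<Sum>j\<in>UNIV. (\<xi> \<bullet> (A j *v e) + e \<bullet> (A j *v \<xi>))\<^sup>2)
           = (\<Sum>j\<in>UNIV. 4 * (\<Sum>e\<in>Basis. ((A j *v \<xi>) \<bullet> e)\<^sup>2))"
          by (subst sum.swap) (simp add: symm inner_commute[of _ "A _ *v \<xi>"] power2_eq_square sum_distrib_left)
        also have "\<dots> = 4 * (\<Sum>j\<in>UNIV. CC j)"
          by (simp add: sumsq_basis CC_def sum_distrib_left)
        finally show ?thesis .
      qed
      have SX: "(\<Sum>e\<in>Basis. Q (Eexp A) (\<xi>, \<eta>, t) (e, 0, 0)) = 4*t\<^sup>2*real CARD('p) - 12*real CARD('p)*(\<eta> \<bullet> \<eta>)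
          + 32 * real \<nu> * (\<eta> \<bullet> \<eta>) + 4*(\<xi> \<bullet> \<xi>)*real CARD('p) + 8*(\<xi> \<bullet> \<xi>) - 16 * (\<Sum>j\<in>UNIV. CC j)"
        unfolding Q_Eexp_xi
        by (simp add: sum.distrib sum_subtractf a1 a2 a3 a4 a5a a5b flip: sum_distrib_left sum_distrib_right)
      have b1: "(\<Sum>e\<in>(Basis::(real^'q) set). e \<bullet> e) = real CARD('q)" by (rule card_basis_sum)
      have b2: "(\<Sum>e\<in>(Basis::(real^'q) set). (\<eta> \<bullet> e)\<^sup>2) = \<eta> \<bullet> \<eta>" by (rule sumsq_basis)
      have b3: "(\<Sum>e\<in>(Basis::(real^'q) set). \<Sum>i\<in>UNIV. \<Sum>k\<in>UNIV. e$i*e$k*((A i *v \<xi>) \<bullet> (A k *v \<xi>))) = (\<Sum>j\<in>UNIV. CC j)"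
        by (simp add: sum_Basis_cart axis_sum2 CC_def)
      have SY: "(\<Sum>e\<in>Basis. Q (Eexp A) (\<xi>, \<eta>, t) (0, e, 0)) = -12*t\<^sup>2*real CARD('q) + 4*(\<eta> \<bullet> \<eta>)*real CARD('q) + 8*(\<eta> \<bullet> \<eta>)
          - 12*(\<xi> \<bullet> \<xi>)*real CARD('q) + 16 * (\<Sum>j\<in>UNIV. CC j)"
        unfolding Q_Eexp_eta
        by (simp add: sum.distrib sum_subtractf b1 b2 b3 flip: sum_distrib_left sum_distrib_right) (simp add: algebra_simps)
      show ?thesis
        unfolding L1 SX SY Q_Eexp_t
        by (simp add: power2_norm_eq_inner algebra_simps)
    qed
  qed
qed

end
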